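(* Let $f:\mathbb R\to\mathbb C$ be defined by $f(t)=\sum_{m=1}^{\infty}\frac{1}{m!}e^{i2^{-m}t}$. Then $f$ is smooth, its Taylor series at $0$ has infinite radius of convergence and converges to $f(t)$ for every $t\in\mathbb R$, and for every $t\in\mathbb R$ the series $\hat f(t)$ converges with $\hat f(t)=f(0)=e-1$.
   Context: For a smooth (possibly complex-valued) function $f$ and a point $t$, $\hat f(t)$ denotes the series $\hat f(t):=\sum_{n=0}^{\infty}\frac{(-1)^n}{n!}\,t^n f^{(n)}(t)$ and also its sum when it converges. *)

theory Defs
  imports "HOL-Analysis.Analysis"
begin

text \<open>The function f(t) = sum_{m>=1} (1/m!) exp(i 2^(-m) t); the summation index
  is shifted (m := Suc m) so that the sum runs over m = 1, 2, ...\<close>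
definition fex :: "real \<Rightarrow> complex" where
  "fex t = (\<Sum>m. exp (\<i> * complex_of_real (t / 2 ^ Suc m)) / fact (Suc m))"

fun nth_vderiv :: "nat \<Rightarrow> (real \<Rightarrow> 'a::real_normed_vector) \<Rightarrow> real \<Rightarrow> 'a" where
  "nth_vderiv 0 g = g"
| "nth_vderiv (Suc n) g = (\<lambda>t. vector_derivative (nth_vderiv n g) (at t))"

definition smooth_real :: "(real \<Rightarrow> 'a::real_normed_vector) \<Rightarrow> bool" where
  "smooth_real g \<longleftrightarrow> (\<forall>n t. nth_vderiv n g differentiable (at t))"

end

theory Submission imports Defs begin

lemma V_sums: "(\<lambda>m. 1 / fact (Suc m) :: real) sums (exp 1 - 1)"
proof -
  have "(\<lambda>n. 1 ^ n /\<^sub>R fact n :: real) sums exp 1" by (rule exp_converges)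
  hence "(\<lambda>n. 1 / fact n :: real) sums exp 1" by (simp add: divide_inverse)
  hence "(\<lambda>n. 1 / fact (Suc n) :: real) sums (exp 1 - 1 / fact 0)"
    by (subst sums_Suc_iff) simp
  thus ?thesis by simp
qed

lemma V_sums_c: "(\<lambda>m. 1 / fact (Suc m) :: complex) sums (exp 1 - 1)"
proof -
  have "(\<lambda>n. 1 ^ n /\<^sub>R fact n :: complex) sums exp 1" by (rule exp_converges)
  hence "(\<lambda>n. 1 / fact n :: complex) sums exp 1" by (simp add: divide_inverse scaleR_conv_of_real)
  hence "(\<lambda>n. 1 / fact (Suc n) :: complex) sums (exp 1 - 1 / fact 0)"
    by (subst sums_Suc_iff) simp
  thus ?thesis by simp
qed

lemma exp_sums_c: "(\<lambda>n. z ^ n / fact n :: complex) sums exp z"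
  using exp_converges[of z] by (simp add: divide_inverse scaleR_conv_of_real mult.commute)

lemma swap_lemma:
  fixes x w :: "nat \<Rightarrow> complex" and R :: real
  assumes xR: "\<And>m. norm (x m) \<le> R" and w1: "\<And>m. norm (w m) \<le> 1"
  shows "(\<lambda>n. \<Sum>m. w m * x m ^ n / fact n * (1 / fact (Suc m))) sums (\<Sum>m. w m * exp (x m) * (1 / fact (Suc m)))"
proof -
  define F where "F = (\<lambda>(n,m). w m * x m ^ n / fact n * (1 / fact (Suc m) :: complex))"
  define P where "P = (\<lambda>(n::nat,m::nat). R ^ n / fact n * (1 / fact (Suc m) :: real))"
  have R0: "R \<ge> 0" using xR[of 0] norm_ge_zero order_trans by blast
  have Ph: "((\<lambda>m. P (n, m)) has_sum (R ^ n / fact n * (exp 1 - 1))) UNIV" for n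
  proof -
    have V: "((\<lambda>m. 1 / fact (Suc m) :: real) has_sum (exp 1 - 1)) UNIV"
      by (rule sums_nonneg_imp_has_sum[OF V_sums]) simp
    show ?thesis unfolding P_def using has_sum_cmult_right[OF V, of "R ^ n / fact n"] by simp
  qed
  have Us: "(\<lambda>n. R ^ n / fact n * (exp 1 - 1)) summable_on UNIV"
  proof -
    have "(\<lambda>n. R ^ n / fact n) sums exp R"
      using exp_converges[of R] by (simp add: divide_inverse mult.commute)
    hence "((\<lambda>n. R ^ n / fact n) has_sum exp R) UNIV"
      by (rule sums_nonneg_imp_has_sum) (use R0 in auto)
    thus ?thesis by (intro summable_on_cmult_left) (auto simp: summable_on_def)
  qed
  have Psum: "P summable_on (UNIV \<times> UNIV)"
    by (rule summable_on_SigmaI[OF Ph Us]) (use R0 in \<open>auto simp: P_def\<close>)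
  have Fabs: "(\<lambda>p. norm (F p)) summable_on (UNIV \<times> UNIV)"
  proof (rule Infinite_Sum.abs_summable_on_comparison_test)
    show "(\<lambda>p. norm (P p)) summable_on (UNIV \<times> UNIV)"
      using Psum by (rule summable_on_cong[THEN iffD1, rotated]) (use R0 in \<open>auto simp: P_def\<close>)
    fix nm :: "nat \<times> nat" 
    obtain n m where nm: "nm = (n,m)" by fastforce
    have "norm (F nm) = norm (w m) * norm (x m) ^ n / fact n * (1 / fact (Suc m))"
      by (simp add: F_def nm norm_mult norm_divide norm_power del: fact_Suc)
    also have "\<dots> \<le> 1 * R ^ n / fact n * (1 / fact (Suc m))"
      by (intro mult_right_mono divide_right_mono mult_mono power_mono w1 xR) auto
    also have "\<dots> = norm (P nm)" using R0 by (simp add: P_def nm)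
    finally show "norm (F nm) \<le> norm (P nm)" .
  qed
  have Fs: "F summable_on (UNIV \<times> UNIV)" by (rule abs_summable_summable[OF Fabs])
  have FS: "(F has_sum infsum F (UNIV \<times> UNIV)) (UNIV \<times> UNIV)"
    using Fs by (simp add: summable_iff_has_sum_infsum)
  have row: "((\<lambda>m. F (n, m)) has_sum (\<Sum>m. w m * x m ^ n / fact n * (1 / fact (Suc m)))) UNIV" for n
  proof -
    have "(\<lambda>m. F (n, m)) summable_on UNIV"
      using summable_on_SigmaD1[of "\<lambda>n m. F (n,m)" UNIV "\<lambda>_. UNIV" n] Fs by simp
    hence h: "((\<lambda>m. F (n, m)) has_sum infsum (\<lambda>m. F (n, m)) UNIV) UNIV"
      by (simp add: summable_iff_has_sum_infsum)
    hence "(\<lambda>m. F (n, m)) sums infsum (\<lambda>m. F (n, m)) UNIV" by (rule has_sum_imp_sums)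
    hence "(\<Sum>m. F (n, m)) = infsum (\<lambda>m. F (n, m)) UNIV" by (simp add: sums_iff)
    with h show ?thesis by (simp add: F_def)
  qed
  have col: "((\<lambda>n. F (n, m)) has_sum (w m * exp (x m) * (1 / fact (Suc m)))) UNIV" for m
  proof -
    have "(\<lambda>n. w m * (x m ^ n / fact n) * (1 / fact (Suc m))) sums (w m * exp (x m) * (1 / fact (Suc m)))"
      by (intro sums_mult sums_mult2 exp_sums_c)
    moreover have "summable (\<lambda>n. norm (w m * (x m ^ n / fact n) * (1 / fact (Suc m))))"
    proof -
      have "summable (\<lambda>n. norm (w m) * (norm (x m) ^ n / fact n) * (1 / fact (Suc m)))"
        by (intro summable_mult summable_mult2) (simp add: summable_exp[of "norm (x m)", simplified divide_inverse[symmetric]] divide_inverse mult.commute)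
      thus ?thesis by (simp add: norm_mult norm_divide norm_power del: fact_Suc)
    qed
    ultimately show ?thesis using norm_summable_imp_has_sum by (fastforce simp: F_def)
  qed
  have A: "((\<lambda>n. \<Sum>m. w m * x m ^ n / fact n * (1 / fact (Suc m))) has_sum infsum F (UNIV \<times> UNIV)) UNIV"
    by (rule has_sum_Sigma'[OF FS]) (use row in simp)
  have FS': "((\<lambda>(m,n). F (n,m)) has_sum infsum F (UNIV \<times> UNIV)) (UNIV \<times> UNIV)"
    using FS has_sum_swap by blast
  have B: "((\<lambda>m. w m * exp (x m) * (1 / fact (Suc m))) has_sum infsum F (UNIV \<times> UNIV)) UNIV"
    by (rule has_sum_Sigma'[OF FS']) (use col in simp)
  have "(\<Sum>m. w m * exp (x m) * (1 / fact (Suc m))) = infsum F (UNIV \<times> UNIV)"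
    using has_sum_imp_sums[OF B] by (simp add: sums_iff)
  with has_sum_imp_sums[OF A] show ?thesis by simp
qed

definition cc :: "nat \<Rightarrow> complex" where "cc m = complex_of_real (1 / 2 ^ Suc m)"

definition G :: "nat \<Rightarrow> complex \<Rightarrow> complex" where
  "G n = (\<lambda>z. \<Sum>m. (\<i> * cc m) ^ n * exp (\<i> * cc m * z) / fact (Suc m))"

lemma norm_icc: "norm (\<i> * cc m) \<le> 1"
proof -
  have "(1::real) \<le> 2 ^ Suc m" by (rule one_le_power) simp
  thus ?thesis unfolding cc_def norm_mult norm_of_real by simp
qed

lemma norm_exp_bound: "norm (exp (\<i> * cc m * y)) \<le> exp (norm y)"
proof -
  have "norm (exp (\<i> * cc m * y)) = exp (Re (\<i> * cc m * y))" by (rule norm_exp_eq_Re)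
  also have "Re (\<i> * cc m * y) \<le> norm (\<i> * cc m * y)" by (rule complex_Re_le_cmod)
  also have "norm (\<i> * cc m * y) \<le> norm y"
    using norm_icc[of m] by (simp add: norm_mult mult_left_le_one_le)
  finally show ?thesis by simp
qed

lemma term_bound: "norm ((\<i> * cc m) ^ n * exp (\<i> * cc m * y) / fact (Suc m)) \<le> exp (norm y) / fact (Suc m)"
proof -
  have "norm ((\<i> * cc m) ^ n * exp (\<i> * cc m * y) / fact (Suc m))
      = norm (\<i> * cc m) ^ n * norm (exp (\<i> * cc m * y)) / fact (Suc m)"
    by (simp add: norm_mult norm_divide norm_power del: fact_Suc)
  also have "\<dots> \<le> 1 * exp (norm y) / fact (Suc m)"
    by (intro divide_right_mono mult_mono power_le_one norm_icc norm_exp_bound) auto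
  finally show ?thesis by simp
qed

lemma summable_M: "summable (\<lambda>m. C / fact (Suc m) :: real)"
proof -
  have "summable (\<lambda>m. 1 / fact (Suc m) :: real)" using V_sums by (simp add: sums_iff)
  hence "summable (\<lambda>m. C * (1 / fact (Suc m) :: real))" by (rule summable_mult)
  thus ?thesis by simp
qed

lemma G_summable: "summable (\<lambda>m. (\<i> * cc m) ^ n * exp (\<i> * cc m * z) / fact (Suc m))"
  by (rule summable_comparison_test'[OF summable_M[of "exp (norm z)"]]) (rule term_bound)

lemma G_deriv: "(G n has_field_derivative G (Suc n) z) (at z)"
proof -
  define S where "S = ball (0::complex) (norm z + 1)"
  define f where "f = (\<lambda>m z. (\<i> * cc m) ^ n * exp (\<i> * cc m * z) / fact (Suc m))"
  define f' where "f' = (\<lambda>m z. (\<i> * cc m) ^ Suc n * exp (\<i> * cc m * z) / fact (Suc m))"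
  have 1: "convex S" by (simp add: S_def)
  have 2: "(f m has_field_derivative f' m y) (at y within S)" for m y
    unfolding f_def f'_def
    by (auto intro!: derivative_eq_intros simp del: fact_Suc)
  have 3: "uniformly_convergent_on S (\<lambda>m y. \<Sum>i<m. f' i y)"
  proof (rule Weierstrass_m_test'[OF _ summable_M[of "exp (norm z + 1)"]])
    fix m y assume "y \<in> S"
    hence "norm y \<le> norm z + 1" by (simp add: S_def)
    hence "exp (norm y) / fact (Suc m) \<le> exp (norm z + 1) / fact (Suc m)"
      by (intro divide_right_mono) auto
    with term_bound[of m "Suc n" y] show "norm (f' m y) \<le> exp (norm z + 1) / fact (Suc m)"
      unfolding f'_def by linarith
  qed
  have 4: "summable (\<lambda>m. f m 0)" using G_summable[of n 0] by (simp add: f_def)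
  have 5: "z \<in> interior S" "0 \<in> S" by (auto simp: S_def add_nonneg_pos)
  from has_field_derivative_series'(2)[OF 1 2 3 5(2) 4 5(1)]
  show ?thesis by (simp add: G_def f_def f'_def)
qed

lemma vderiv_eq: "nth_vderiv n fex = (\<lambda>t. G n (of_real t))"
proof (induction n)
  case 0
  show ?case
    by (auto simp: fex_def G_def cc_def intro!: ext suminf_cong arg_cong[where f=exp])
next
  case (Suc n)
  show ?case
    by (auto simp: Suc intro!: ext vector_derivative_at has_vector_derivative_real_field G_deriv)
qed

lemma taylor_G: "(\<lambda>n. G n 0 / fact n * z ^ n) sums G 0 z"
proof -
  have eq: "G n 0 / fact n * z ^ n = (\<Sum>m. 1 * (\<i> * cc m * z) ^ n / fact n * (1 / fact (Suc m)))" for n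
  proof -
    have "G n 0 / fact n * z ^ n = G n 0 * (z ^ n / fact n)" by simp
    also have "\<dots> = (\<Sum>m. (\<i> * cc m) ^ n * exp (\<i> * cc m * 0) / fact (Suc m) * (z ^ n / fact n))"
      unfolding G_def by (rule suminf_mult2[OF G_summable])
    also have "\<dots> = (\<Sum>m. 1 * (\<i> * cc m * z) ^ n / fact n * (1 / fact (Suc m)))"
      by (intro suminf_cong) (simp add: power_mult_distrib)
    finally show ?thesis .
  qed
  have "(\<lambda>n. \<Sum>m. 1 * (\<i> * cc m * z) ^ n / fact n * (1 / fact (Suc m))) sums
        (\<Sum>m. 1 * exp (\<i> * cc m * z) * (1 / fact (Suc m)))"
  proof (rule swap_lemma[where R="norm z"])
    fix m show "norm (\<i> * cc m * z) \<le> norm z"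
      using norm_icc[of m] by (simp add: norm_mult mult_left_le_one_le)
  qed simp
  moreover have "(\<Sum>m. 1 * exp (\<i> * cc m * z) * (1 / fact (Suc m))) = G 0 z"
    by (simp add: G_def)
  ultimately show ?thesis by (simp only: eq)
qed

lemma fex0: "fex 0 = exp 1 - 1"
  using V_sums_c by (simp add: fex_def sums_iff)

lemma hat_G: "(\<lambda>n. (-1) ^ n / fact n * complex_of_real t ^ n * G n (of_real t)) sums (exp 1 - 1)"
proof -
  have eq: "(-1) ^ n / fact n * complex_of_real t ^ n * G n (of_real t) =
      (\<Sum>m. exp (\<i> * cc m * of_real t) * (- (\<i> * cc m * of_real t)) ^ n / fact n * (1 / fact (Suc m)))" for n
  proof -
    have "(-1) ^ n / fact n * complex_of_real t ^ n * G n (of_real t) = G n (of_real t) * ((-1) ^ n / fact n * complex_of_real t ^ n)"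
      by simp
    also have "\<dots> = (\<Sum>m. (\<i> * cc m) ^ n * exp (\<i> * cc m * of_real t) / fact (Suc m) * ((-1) ^ n / fact n * complex_of_real t ^ n))"
      unfolding G_def by (rule suminf_mult2[OF G_summable])
    also have "\<dots> = (\<Sum>m. exp (\<i> * cc m * of_real t) * (- (\<i> * cc m * of_real t)) ^ n / fact n * (1 / fact (Suc m)))"
      by (intro suminf_cong) (simp add: power_mult_distrib power_minus[of "_ * _"] mult_ac)
    finally show ?thesis .
  qed
  have "(\<lambda>n. \<Sum>m. exp (\<i> * cc m * of_real t) * (- (\<i> * cc m * of_real t)) ^ n / fact n * (1 / fact (Suc m))) sums
        (\<Sum>m. exp (\<i> * cc m * of_real t) * exp (- (\<i> * cc m * of_real t)) * (1 / fact (Suc m)))"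
  proof (rule swap_lemma[where R="norm (complex_of_real t)"])
    fix m show "norm (- (\<i> * cc m * of_real t)) \<le> norm (complex_of_real t)"
      using norm_icc[of m] by (simp only: norm_minus_cancel norm_mult) (simp add: mult_left_le_one_le)
    have "\<i> * cc m * of_real t = \<i> * complex_of_real (1 / 2 ^ Suc m * t)" by (simp add: cc_def)
    thus "norm (exp (\<i> * cc m * of_real t)) \<le> 1" by (simp only: norm_exp_i_times)
  qed
  moreover have "(\<Sum>m. exp (\<i> * cc m * of_real t) * exp (- (\<i> * cc m * of_real t)) * (1 / fact (Suc m))) = exp 1 - 1"
    using V_sums_c by (simp add: exp_minus sums_iff)
  ultimately show ?thesis by (simp only: eq)
qed

theorem mainTheorem17:
  shows "smooth_real fex
    \<and> conv_radius (\<lambda>n. nth_vderiv n fex 0 / fact n) = \<infinity>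
    \<and> (\<forall>t::real. (\<lambda>n. nth_vderiv n fex 0 / fact n * complex_of_real t ^ n) sums fex t)
    \<and> (\<forall>t::real. (\<lambda>n. (-1) ^ n / fact n * complex_of_real t ^ n * nth_vderiv n fex t) sums fex 0)
    \<and> fex 0 = exp 1 - 1"
proof (intro conjI allI)
  show "smooth_real fex"
    unfolding smooth_real_def vderiv_eq
    by (blast intro: differentiableI_vector has_vector_derivative_real_field G_deriv)
  show "conv_radius (\<lambda>n. nth_vderiv n fex 0 / fact n) = \<infinity>"
    unfolding vderiv_eq
    by (rule conv_radius_inftyI'') (use taylor_G in \<open>auto simp: sums_iff\<close>)
  fix t :: real
  show "(\<lambda>n. nth_vderiv n fex 0 / fact n * complex_of_real t ^ n) sums fex t"
  proof -
    have e: "fex t = G 0 (of_real t)" using vderiv_eq[of 0] by (metis nth_vderiv.simps(1))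
    show ?thesis unfolding vderiv_eq e using taylor_G[of "of_real t"] by simp
  qed
next
  fix t :: real
  show "(\<lambda>n. (-1) ^ n / fact n * complex_of_real t ^ n * nth_vderiv n fex t) sums fex 0"
    using hat_G[of t] by (simp add: vderiv_eq fex0)
qed (rule fex0)

end
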